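(* Let $G=(V,E)$ be a simple undirected graph with $n=|V|$ vertices and $m=|E|$ edges, let $b$ be a real number, and let $$\mathcal{P}_1=\Big\{(x,y)\in\mathbb{R}^m_{+}\times[0,1]^n:\ 1-y_u-y_v\le x_{uv}\ \text{for all } \{u,v\}\in E,\ \ \textstyle\sum_{v\in V}y_v\le b\Big\}.$$ If $b\ge 1$, then for every edge $\{u,v\}\in E$ the inequality $1-y_u-y_v\le x_{uv}$ is facet-defining for $\mathcal{P}_1$.
   Context: $x$ is indexed by edges and $y$ by vertices of $G$; $\mathcal{P}_1$ is the linear relaxation of the MIP formulation of the 1-hop distance-based critical node detection problem. An inequality is facet-defining if it is valid for $\mathcal{P}_1$ and the face it induces has dimension $\dim\mathcal{P}_1-1$. *)

theory Defs
  imports "HOL-Analysis.Analysis"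
begin

text \<open>A simple undirected graph: vertices are the elements of the finite type 'v,
  edges are indexed by the finite type 'e, each edge being a 2-element vertex set,
  with distinct indices giving distinct edges.\<close>
definition simple_graph :: "('e::finite \<Rightarrow> 'v::finite set) \<Rightarrow> bool" where
  "simple_graph E \<longleftrightarrow> (\<forall>e. card (E e) = 2) \<and> inj E"

definition P1 :: "('e::finite \<Rightarrow> 'v::finite set) \<Rightarrow> real \<Rightarrow> ((real^'e) \<times> (real^'v)) set" where
  "P1 E b = {p. let x = fst p; y = snd p in
      (\<forall>e. 0 \<le> x $ e) \<and> (\<forall>v. 0 \<le> y $ v \<and> y $ v \<le> 1) \<and>
      (\<forall>e u v. E e = {u, v} \<longrightarrow> 1 - y $ u - y $ v \<le> x $ e) \<and>
      (\<Sum>v\<in>UNIV. y $ v) \<le> b}"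

definition facet_defining :: "('a::euclidean_space) set \<Rightarrow> ('a \<Rightarrow> real) \<Rightarrow> ('a \<Rightarrow> real) \<Rightarrow> bool" where
  "facet_defining P g h \<longleftrightarrow>
     (\<forall>p\<in>P. g p \<le> h p) \<and> aff_dim {p\<in>P. g p = h p} = aff_dim P - 1"

end

theory Submission
  imports Defs
begin

lemma coord_close:
  fixes p c :: "(real^'e::finite) \<times> (real^'v::finite)"
  assumes "dist p c < d"
  shows "\<bar>fst p $ i - fst c $ i\<bar> < d" "\<bar>snd p $ j - snd c $ j\<bar> < d"
proof -
  have "\<bar>fst p $ i - fst c $ i\<bar> \<le> norm (fst p - fst c)"
    using component_le_norm_cart[of "fst p - fst c" i] by simp
  also have "\<dots> \<le> norm (p - c)"
    using norm_fst_le[of "fst p - fst c" "snd p - snd c"] by (cases p, cases c) simp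
  finally show "\<bar>fst p $ i - fst c $ i\<bar> < d" using assms by (simp add: dist_norm)
  have "\<bar>snd p $ j - snd c $ j\<bar> \<le> norm (snd p - snd c)"
    using component_le_norm_cart[of "snd p - snd c" j] by simp
  also have "\<dots> \<le> norm (p - c)"
    by (cases p, cases c) (simp add: norm_snd_le)
  finally show "\<bar>snd p $ j - snd c $ j\<bar> < d" using assms by (simp add: dist_norm)
qed

lemma sum_small:
  fixes y :: "real^'v::finite"
  assumes "\<And>w. y $ w \<le> 2 * d" "d = 1 / (8 * (real CARD('v) + 1))"
  shows "(\<Sum>w\<in>UNIV. y $ w) \<le> 1"
proof -
  have d0: "d \<ge> 0" using assms(2) by simp
  have "(\<Sum>w\<in>UNIV. y $ w) \<le> (\<Sum>w\<in>(UNIV::'v set). 2 * d)"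
    by (rule sum_mono) (use assms in auto)
  also have "\<dots> = real CARD('v) * (2 * d)" by simp
  also have "\<dots> \<le> (real CARD('v) + 1) * (8 * d)"
    by (rule mult_mono) (use d0 in auto)
  also have "\<dots> = 1" using assms(2) by simp
  finally show ?thesis .
qed

theorem proposition3:
  fixes E :: "'e::finite \<Rightarrow> 'v::finite set" and b :: real and e :: 'e and u v :: 'v
  assumes "simple_graph E" and "b \<ge> 1" and "E e = {u, v}"
  shows "facet_defining (P1 E b) (\<lambda>p. 1 - snd p $ u - snd p $ v) (\<lambda>p. fst p $ e)"
proof -
  define d :: real where "d = 1 / (8 * (real CARD('v) + 1))"
  have d0: "d > 0" and d1: "d \<le> 1/8" unfolding d_def by (auto simp: field_simps)
  define F where "F = {p \<in> P1 E b. 1 - snd p $ u - snd p $ v = fst p $ e}"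
  define a :: "(real^'e) \<times> (real^'v)" where "a = (axis e 1, axis u 1 + axis v 1)"
  have a0: "a \<noteq> 0" unfolding a_def by (simp add: axis_eq_0_iff zero_prod_def)
  have H: "{p. 1 - snd p $ u - snd p $ v = fst p $ e} = {p. a \<bullet> p = 1}"
    by (auto simp: a_def inner_axis' inner_add_left prod_eq_iff split_beta)
  define c1 :: "(real^'e) \<times> (real^'v)" where "c1 = (\<chi> f. 2, \<chi> w. d)"
  define c2 :: "(real^'e) \<times> (real^'v)" where
    "c2 = (\<chi> f. if f = e then 1 - 2 * d else 2, \<chi> w. d)"
  have ball1: "ball c1 d \<subseteq> P1 E b"
  proof
    fix p assume "p \<in> ball c1 d"
    then have p: "dist p c1 < d" by (simp add: dist_commute)
    have x: "fst p $ f > 2 - d" for f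
      using coord_close(1)[OF p, of f] by (simp add: c1_def abs_less_iff)
    have y: "snd p $ w > 0 \<and> snd p $ w < 2 * d" for w
      using coord_close(2)[OF p, of w] by (simp add: c1_def abs_less_iff)
    have y1: "snd p $ w \<le> 1" for w using y[of w] d1 by linarith
    have s: "(\<Sum>w\<in>UNIV. snd p $ w) \<le> 1"
      by (rule sum_small[OF _ d_def]) (use y in \<open>auto intro: less_imp_le\<close>)
    have x0: "0 \<le> fst p $ f" for f using x[of f] d1 by linarith
    have ed: "1 - snd p $ a' - snd p $ b' \<le> fst p $ f" for f a' b'
      using x[of f] y[of a'] y[of b'] d1 by linarith
    show "p \<in> P1 E b"
      unfolding P1_def Let_def using x0 y y1 s ed assms(2)
      by (auto intro: less_imp_le)
  qed
  have ball2: "ball c2 d \<inter> {p. a \<bullet> p = 1} \<subseteq> F"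
  proof
    fix p assume "p \<in> ball c2 d \<inter> {p. a \<bullet> p = 1}"
    then have p: "dist p c2 < d" and h: "1 - snd p $ u - snd p $ v = fst p $ e"
      using H by (auto simp: dist_commute)
    have x: "f \<noteq> e \<Longrightarrow> fst p $ f > 2 - d" for f
      using coord_close(1)[OF p, of f] by (simp add: c2_def abs_less_iff)
    have y: "snd p $ w > 0 \<and> snd p $ w < 2 * d" for w
      using coord_close(2)[OF p, of w] by (simp add: c2_def abs_less_iff)
    have y1: "snd p $ w \<le> 1" for w using y[of w] d1 by linarith
    have s: "(\<Sum>w\<in>UNIV. snd p $ w) \<le> 1"
      by (rule sum_small[OF _ d_def]) (use y in \<open>auto intro: less_imp_le\<close>)
    have xe: "fst p $ e \<ge> 0" using h y[of u] y[of v] d1 by linarith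
    have x0: "\<forall>f. 0 \<le> fst p $ f"
    proof
      fix f show "0 \<le> fst p $ f" using x[of f] xe d1 by (cases "f = e") auto
    qed
    have ed: "\<forall>f a' b'. E f = {a', b'} \<longrightarrow> 1 - snd p $ a' - snd p $ b' \<le> fst p $ f"
    proof (intro allI impI)
      fix f a' b' assume "E f = {a', b'}"
      show "1 - snd p $ a' - snd p $ b' \<le> fst p $ f"
      proof (cases "f = e")
        case True
        then have "{a', b'} = {u, v}" using assms(3) \<open>E f = {a', b'}\<close> by metis
        then have "(a' = u \<and> b' = v) \<or> (a' = v \<and> b' = u)" unfolding doubleton_eq_iff by blast
        then show ?thesis
        proof
          assume "a' = u \<and> b' = v" then show ?thesis using h True by simp
        next
          assume "a' = v \<and> b' = u" then show ?thesis using h True by simp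
        qed
      next
        case False then show ?thesis using x[of f] y[of a'] y[of b'] d1 by linarith
      qed
    qed
    show "p \<in> F"
      unfolding F_def P1_def Let_def using x0 y y1 s ed h assms(2)
      by (auto intro: less_imp_le)
  qed
  have affP: "aff_dim (P1 E b) = int DIM((real^'e) \<times> (real^'v))"
  proof (rule antisym)
    show "aff_dim (P1 E b) \<le> int DIM((real^'e) \<times> (real^'v))" by (rule aff_dim_le_DIM)
    have "aff_dim (ball c1 d) = int DIM((real^'e) \<times> (real^'v))"
      by (rule aff_dim_open) (use d0 in auto)
    then show "int DIM((real^'e) \<times> (real^'v)) \<le> aff_dim (P1 E b)"
      using aff_dim_subset[OF ball1] by simp
  qed
  have c2H: "c2 \<in> {p. a \<bullet> p = 1}" "c2 \<in> ball c2 d"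
    using d0 by (auto simp: c2_def a_def inner_axis' inner_add_left)
  have hd: "aff_dim {p. a \<bullet> p = 1} = int DIM((real^'e) \<times> (real^'v)) - 1"
    using aff_dim_hyperplane[OF a0, of 1] DIM_positive[where 'a="(real^'e) \<times> (real^'v)"]
    by (simp only: of_nat_diff)
  have affF: "aff_dim F = int DIM((real^'e) \<times> (real^'v)) - 1"
  proof (rule antisym)
    have FH: "F \<subseteq> {p. a \<bullet> p = 1}" unfolding F_def using H by auto
    show "aff_dim F \<le> int DIM((real^'e) \<times> (real^'v)) - 1"
      using aff_dim_subset[OF FH] hd by linarith
    have "aff_dim ({p. a \<bullet> p = 1} \<inter> ball c2 d) = aff_dim {p. a \<bullet> p = 1}"
      by (rule aff_dim_convex_Int_open) (use c2H convex_hyperplane in auto)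
    then show "int DIM((real^'e) \<times> (real^'v)) - 1 \<le> aff_dim F"
      using aff_dim_subset[OF ball2] hd by (simp only: Int_commute)
  qed
  have valid: "\<forall>p\<in>P1 E b. 1 - snd p $ u - snd p $ v \<le> fst p $ e"
    using assms(3) unfolding P1_def Let_def by auto
  show ?thesis
    unfolding facet_defining_def using valid affP affF by (simp add: F_def)
qed

end
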